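(* There exists an absolute constant $C_1$ such that the following holds. Let $K\ge1$, let $d\ge2$ be an integer, and let $R_1,R_2$ be $K$-squares which are both contained in a square $R_3\subset[0,1]^2$ of side length $K^{-1/2^d}$ but are not both contained in any square of side length $K^{-1/2^{d-1}}$. Then the set $\mathrm{Reach}_{lin}(R_1,R_2,R_3)$ intersects at most $C_1K$ of the squares in $\{2R:R\in\mathcal{C}_K\}$.
   Context: A $K$-square is a square in $[0,1]^2$ of side length $1/K$; $\mathcal{C}_K$ is the collection of dyadic $K$-squares; for $R\in\mathcal{C}_K$, $2R$ is the square with the same center as $R$ and twice the side length. For squares $R_1,R_2,R_3\subset[0,1]^2$, $\mathrm{Reach}_{lin}(R_1,R_2,R_3)$ is the set of $(x,y)\in R_3$ such that either $(x,y),(x_1,y_1),(x_2,y_2)$ are collinear for some $(x_1,y_1)\in R_1$, $(x_2,y_2)\in R_2$, or $y=y_1$ for some $(x_1,y_1)\in R_1$. *)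

theory Defs
  imports "HOL-Analysis.Analysis"
begin

definition sq :: "real \<Rightarrow> real \<Rightarrow> real \<Rightarrow> (real \<times> real) set" where
  "sq a b s = {(x, y). a \<le> x \<and> x \<le> a + s \<and> b \<le> y \<and> y \<le> b + s}"

definition is_square :: "(real \<times> real) set \<Rightarrow> real \<Rightarrow> bool" where
  "is_square S s \<longleftrightarrow> (\<exists>a b. S = sq a b s)"

definition unit_sq :: "(real \<times> real) set" where
  "unit_sq = sq 0 0 1"

definition K_square :: "real \<Rightarrow> (real \<times> real) set \<Rightarrow> bool" where
  "K_square K R \<longleftrightarrow> is_square R (1 / K) \<and> R \<subseteq> unit_sq"

definition dyadic_squares :: "real \<Rightarrow> (real \<times> real) set set" where
  "dyadic_squares K = {sq (of_int i / K) (of_int j / K) (1 / K) | i j :: int.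
      0 \<le> i \<and> 0 \<le> j \<and> of_int i + 1 \<le> K \<and> of_int j + 1 \<le> K}"

definition dbl :: "(real \<times> real) set \<Rightarrow> (real \<times> real) set" where
  "dbl R = \<Union>{sq (a - s / 2) (b - s / 2) (2 * s) | a b s. s > 0 \<and> R = sq a b s}"

definition Reach_lin :: "(real \<times> real) set \<Rightarrow> (real \<times> real) set \<Rightarrow> (real \<times> real) set
    \<Rightarrow> (real \<times> real) set" where
  "Reach_lin R1 R2 R3 = {p \<in> R3.
      (\<exists>p1\<in>R1. \<exists>p2\<in>R2. collinear {p, p1, p2}) \<or> (\<exists>p1\<in>R1. snd p = snd p1)}"

end

theory Submission imports Defs begin

lemma count_lemma:
  fixes S :: "(int \<times> int) set" and g :: "int \<Rightarrow> real"
  assumes A0: "A \<ge> 0" and B0: "B \<ge> 0"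
    and H: "\<And>i j. (i,j) \<in> S \<Longrightarrow> \<bar>of_int i - u\<bar> \<le> A \<and> \<bar>of_int j - g i\<bar> \<le> B"
  shows "real (card S) \<le> (2*A+1)*(2*B+1)"
proof -
  define f where "f = (\<lambda>(i::int,j::int). (i, j - \<lceil>g i - B\<rceil>))"
  have inj: "inj_on f S" by (auto simp: inj_on_def f_def)
  have sub: "f ` S \<subseteq> {\<lceil>u-A\<rceil>..\<lfloor>u+A\<rfloor>} \<times> {0..\<lfloor>2*B\<rfloor>}"
  proof
    fix z assume "z \<in> f ` S"
    then obtain i j where ij: "(i,j) \<in> S" and z: "z = (i, j - \<lceil>g i - B\<rceil>)"
      by (auto simp: f_def)
    from H[OF ij] have h1: "u - A \<le> of_int i" "of_int i \<le> u + A"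
      "g i - B \<le> of_int j" "of_int j \<le> g i + B" by auto
    have "\<lceil>u-A\<rceil> \<le> i" using h1 by (simp add: ceiling_le_iff)
    moreover have "i \<le> \<lfloor>u+A\<rfloor>" using h1 by (simp add: le_floor_iff)
    moreover have "\<lceil>g i - B\<rceil> \<le> j" using h1 by (simp add: ceiling_le_iff)
    moreover have "j - \<lceil>g i - B\<rceil> \<le> \<lfloor>2*B\<rfloor>"
    proof -
      have "of_int (j - \<lceil>g i - B\<rceil>) \<le> 2*B"
      proof -
        have "g i - B \<le> of_int \<lceil>g i - B\<rceil>" by (rule le_of_int_ceiling)
        thus ?thesis using h1 by linarith
      qed
      thus ?thesis by (simp add: le_floor_iff)
    qed
    ultimately show "z \<in> {\<lceil>u-A\<rceil>..\<lfloor>u+A\<rfloor>} \<times> {0..\<lfloor>2*B\<rfloor>}" using z by auto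
  qed
  have "card S \<le> card ({\<lceil>u-A\<rceil>..\<lfloor>u+A\<rfloor>} \<times> {0..\<lfloor>2*B\<rfloor>})"
    by (rule card_inj_on_le[OF inj sub]) auto
  also have "\<dots> = nat (\<lfloor>u+A\<rfloor> - \<lceil>u-A\<rceil> + 1) * nat (\<lfloor>2*B\<rfloor> + 1)"
    by (simp add: card_cartesian_product)
  finally have c: "real (card S) \<le> real (nat (\<lfloor>u+A\<rfloor> - \<lceil>u-A\<rceil> + 1)) * real (nat (\<lfloor>2*B\<rfloor> + 1))"
    by (metis of_nat_le_iff of_nat_mult)
  have e1: "real (nat (\<lfloor>u+A\<rfloor> - \<lceil>u-A\<rceil> + 1)) \<le> 2*A+1"
  proof (cases "\<lfloor>u+A\<rfloor> - \<lceil>u-A\<rceil> + 1 \<ge> 0")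
    case True
    have "real (nat (\<lfloor>u+A\<rfloor> - \<lceil>u-A\<rceil> + 1)) = of_int (\<lfloor>u+A\<rfloor> - \<lceil>u-A\<rceil> + 1)"
      using True by simp
    also have "\<dots> \<le> 2*A+1"
    proof -
      have "of_int \<lfloor>u+A\<rfloor> \<le> u+A" by (rule of_int_floor_le)
      moreover have "u-A \<le> of_int \<lceil>u-A\<rceil>" by (rule le_of_int_ceiling)
      ultimately show ?thesis by (simp only: of_int_add of_int_diff of_int_1)
    qed
    finally show ?thesis .
  next
    case False thus ?thesis using A0 by simp
  qed
  have e2: "real (nat (\<lfloor>2*B\<rfloor> + 1)) \<le> 2*B+1"
  proof -
    have "\<lfloor>2*B\<rfloor> + 1 \<ge> 0" using B0 by simp
    hence "real (nat (\<lfloor>2*B\<rfloor> + 1)) = of_int (\<lfloor>2*B\<rfloor> + 1)" by simp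
    also have "\<dots> \<le> 2*B+1" using of_int_floor_le[of "2*B"] by simp
    finally show ?thesis .
  qed
  have "real (nat (\<lfloor>u+A\<rfloor> - \<lceil>u-A\<rceil> + 1)) * real (nat (\<lfloor>2*B\<rfloor> + 1)) \<le> (2*A+1)*(2*B+1)"
    by (rule mult_mono[OF e1 e2]) (use A0 in auto)
  with c show ?thesis by linarith
qed

lemma count_lemma_swap:
  fixes S :: "(int \<times> int) set" and g :: "int \<Rightarrow> real"
  assumes A0: "A \<ge> 0" and B0: "B \<ge> 0"
    and H: "\<And>i j. (i,j) \<in> S \<Longrightarrow> \<bar>of_int j - u\<bar> \<le> A \<and> \<bar>of_int i - g j\<bar> \<le> B"
  shows "real (card S) \<le> (2*A+1)*(2*B+1)"
proof -
  have "card S = card (prod.swap ` S)" by (simp add: card_image)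
  also have "real (card (prod.swap ` S)) \<le> (2*A+1)*(2*B+1)"
    by (rule count_lemma[OF A0 B0, of _ u g]) (auto dest: H)
  finally show ?thesis .
qed

lemma cone_num:
  fixes a1 b1 a2 b2 a3 s h x y x1 y1 x2 y2 c :: real
  assumes hp: "h > 0" and sp: "s > 0"
    and "a1 \<le> x1" "x1 \<le> a1+h" "a2 \<le> x2" "x2 \<le> a2+h"
    and "b1 \<le> y1" "y1 \<le> b1+h" "b2 \<le> y2" "y2 \<le> b2+h"
    and "a3 \<le> x" "x \<le> a3+s" "a3 \<le> x1" "x1 \<le> a3+s"
    and ab: "\<bar>b2-b1\<bar> \<le> \<bar>a2-a1\<bar>" and big: "\<bar>a2-a1\<bar> - h \<ge> s^2/2"
    and ex: "x = x1 + c*(x2-x1)" and ey: "y = y1 + c*(y2-y1)"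
  shows "\<bar>y - b1 - ((b2-b1)/(a2-a1))*(x-a1)\<bar> \<le> 2*h*(1+2/s)"
proof -
  define m where "m = (b2-b1)/(a2-a1)"
  have "s^2 > 0" using sp by simp
  have da: "a2 - a1 \<noteq> 0"
  proof
    assume "a2 - a1 = 0"
    with big have "s^2/2 \<le> -h" by simp
    with \<open>s^2 > 0\<close> hp show False by linarith
  qed
  have mb: "m * (a2-a1) = b2 - b1" using da by (simp add: m_def)
  have m1: "\<bar>m\<bar> \<le> 1" using ab da by (simp add: m_def abs_divide divide_le_eq_1)
  have dx: "\<bar>x2 - x1\<bar> \<ge> s^2/2"
  proof (cases "a2 - a1 \<ge> 0")
    case True thus ?thesis using assms by linarith
  next
    case False thus ?thesis using assms by linarith
  qed
  have s2: "s^2/2 > 0" using sp by simp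
  have "\<bar>c\<bar> * \<bar>x2 - x1\<bar> = \<bar>x - x1\<bar>" using ex by (simp add: abs_mult)
  also have "\<dots> \<le> s" using assms by auto
  finally have cs: "\<bar>c\<bar> * \<bar>x2 - x1\<bar> \<le> s" .
  have "\<bar>c\<bar> * (s^2/2) \<le> s" 
    using cs dx mult_left_mono[OF dx, of "\<bar>c\<bar>"] by linarith
  hence c2: "\<bar>c\<bar> \<le> 2/s" using sp by (simp add: field_simps power2_eq_square)
  have id: "y - b1 - m*(x-a1) = ((y1-b1) + c*((y2-b2)-(y1-b1))) - m*((x1-a1) + c*((x2-a2)-(x1-a1)))"
  proof -
    have "(y - b1 - m*(x-a1)) - (((y1-b1) + c*((y2-b2)-(y1-b1))) - m*((x1-a1) + c*((x2-a2)-(x1-a1)))) = c*((b2-b1) - m*(a2-a1))"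
      unfolding ex ey by (simp add: algebra_simps)
    thus ?thesis using mb by simp
  qed
  have t1: "\<bar>(y1-b1) + c*((y2-b2)-(y1-b1))\<bar> \<le> h + \<bar>c\<bar>*h"
  proof -
    have "\<bar>c*((y2-b2)-(y1-b1))\<bar> \<le> \<bar>c\<bar>*h"
      using assms by (auto simp: abs_mult intro!: mult_left_mono)
    thus ?thesis using assms by linarith
  qed
  have t2: "\<bar>(x1-a1) + c*((x2-a2)-(x1-a1))\<bar> \<le> h + \<bar>c\<bar>*h"
  proof -
    have "\<bar>c*((x2-a2)-(x1-a1))\<bar> \<le> \<bar>c\<bar>*h"
      using assms by (auto simp: abs_mult intro!: mult_left_mono)
    thus ?thesis using assms by linarith
  qed
  have t3: "\<bar>m*((x1-a1) + c*((x2-a2)-(x1-a1)))\<bar> \<le> h + \<bar>c\<bar>*h"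
  proof -
    have "\<bar>m*((x1-a1) + c*((x2-a2)-(x1-a1)))\<bar> \<le> 1 * (h + \<bar>c\<bar>*h)"
      unfolding abs_mult by (rule mult_mono[OF m1 t2]) auto
    thus ?thesis by simp
  qed
  have "\<bar>y - b1 - m*(x-a1)\<bar> \<le> 2*h*(1+\<bar>c\<bar>)"
    unfolding id using t1 t3 by (simp add: algebra_simps)
  also have "\<dots> \<le> 2*h*(1+2/s)" using c2 hp by (intro mult_left_mono) auto
  finally show ?thesis by (simp add: m_def)
qed


lemma sq_mem: "(x,y) \<in> sq a b s \<longleftrightarrow> a \<le> x \<and> x \<le> a + s \<and> b \<le> y \<and> y \<le> b + s"
  by (simp add: sq_def)

lemma sq_inj:
  assumes "s > 0" "s' > 0" "sq a b s = sq a' b' s'"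
  shows "a = a' \<and> b = b' \<and> s = s'"
proof -
  have "(a,b) \<in> sq a' b' s'" "(a',b') \<in> sq a b s"
    "(a+s,b+s) \<in> sq a' b' s'" "(a'+s',b'+s') \<in> sq a b s"
    using assms by (auto simp: sq_mem simp del: sq_def) (auto simp: sq_def)
  thus ?thesis by (auto simp: sq_mem)
qed

lemma dbl_sq: "s > 0 \<Longrightarrow> dbl (sq a b s) = sq (a - s/2) (b - s/2) (2 * s)"
  unfolding dbl_def
proof -
  assume s: "s > 0"
  have "{sq (a' - s' / 2) (b' - s' / 2) (2 * s') |a' b' s'. 0 < s' \<and> sq a b s = sq a' b' s'}
     = {sq (a - s/2) (b - s/2) (2 * s)}"
  proof (intro equalityI subsetI)
    fix Q assume "Q \<in> {sq (a' - s' / 2) (b' - s' / 2) (2 * s') |a' b' s'. 0 < s' \<and> sq a b s = sq a' b' s'}"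
    then obtain a' b' s' where s': "0 < s'" and e: "sq a b s = sq a' b' s'" and Qe: "Q = sq (a' - s' / 2) (b' - s' / 2) (2 * s')"
      by blast
    from sq_inj[OF s s' e] Qe show "Q \<in> {sq (a - s/2) (b - s/2) (2 * s)}" by auto
  next
    fix Q assume "Q \<in> {sq (a - s/2) (b - s/2) (2 * s)}"
    thus "Q \<in> {sq (a' - s' / 2) (b' - s' / 2) (2 * s') |a' b' s'. 0 < s' \<and> sq a b s = sq a' b' s'}"
      using s by blast
  qed
  thus "\<Union> {sq (a' - s' / 2) (b' - s' / 2) (2 * s') |a' b' s'. 0 < s' \<and> sq a b s = sq a' b' s'}
     = sq (a - s/2) (b - s/2) (2 * s)" by simp
qed

definition J :: "real \<Rightarrow> (real \<times> real) set \<Rightarrow> (int \<times> int) set" where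
  "J K X = {(i,j). 0 \<le> i \<and> 0 \<le> j \<and> of_int i + 1 \<le> K \<and> of_int j + 1 \<le> K \<and>
     (\<exists>p\<in>X. \<bar>fst p * K - (of_int i + 1/2)\<bar> \<le> 1 \<and> \<bar>snd p * K - (of_int j + 1/2)\<bar> \<le> 1)}"

lemma J_finite: "finite (J K X)"
proof -
  have "J K X \<subseteq> {0..\<lfloor>K\<rfloor>} \<times> {0..\<lfloor>K\<rfloor>}"
    by (auto simp: J_def le_floor_iff)
  thus ?thesis by (rule finite_subset) auto
qed

lemma J_Un: "J K (X \<union> Y) = J K X \<union> J K Y"
  by (auto simp: J_def)

lemma J_mono: "X \<subseteq> Y \<Longrightarrow> J K X \<subseteq> J K Y"
  by (auto simp: J_def)

lemma card_reduce:
  assumes K: "K \<ge> 1"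
  shows "card {Q \<in> dbl ` dyadic_squares K. Q \<inter> X \<noteq> {}} \<le> card (J K X)"
proof -
  define F where "F = (\<lambda>(i::int,j::int). dbl (sq (of_int i / K) (of_int j / K) (1/K)))"
  have "{Q \<in> dbl ` dyadic_squares K. Q \<inter> X \<noteq> {}} \<subseteq> F ` J K X"
  proof
    fix Q assume "Q \<in> {Q \<in> dbl ` dyadic_squares K. Q \<inter> X \<noteq> {}}"
    then obtain i j p where ij: "0 \<le> i" "0 \<le> j" "of_int i + 1 \<le> K" "of_int j + 1 \<le> K"
      and Q: "Q = dbl (sq (of_int i / K) (of_int j / K) (1/K))" and p: "p \<in> Q" "p \<in> X"
      by (auto simp: dyadic_squares_def)
    have Kp: "K > 0" using K by simp
    have "p \<in> sq (of_int i / K - (1/K)/2) (of_int j / K - (1/K)/2) (2*(1/K))"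
      using p Q dbl_sq[of "1/K"] Kp by simp
    then obtain x y where pxy: "p = (x,y)" and
      b: "of_int i / K - (1/K)/2 \<le> x" "x \<le> of_int i / K - (1/K)/2 + 2*(1/K)"
         "of_int j / K - (1/K)/2 \<le> y" "y \<le> of_int j / K - (1/K)/2 + 2*(1/K)"
      by (cases p) (auto simp: sq_mem simp del: sq_def)
    have "of_int i - 1/2 \<le> x * K" "x * K \<le> of_int i + 3/2"
      "of_int j - 1/2 \<le> y * K" "y * K \<le> of_int j + 3/2"
      using b Kp by (auto simp: field_simps)
    hence "\<bar>x * K - (of_int i + 1/2)\<bar> \<le> 1" "\<bar>y * K - (of_int j + 1/2)\<bar> \<le> 1" by auto
    hence "(i,j) \<in> J K X" using ij p pxy unfolding J_def by (auto intro!: bexI[of _ "(x,y)"])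
    thus "Q \<in> F ` J K X" using Q by (auto simp: F_def)
  qed
  hence "card {Q \<in> dbl ` dyadic_squares K. Q \<inter> X \<noteq> {}} \<le> card (F ` J K X)"
    by (intro card_mono) (auto simp: J_finite)
  also have "\<dots> \<le> card (J K X)" by (rule card_image_le[OF J_finite])
  finally show ?thesis .
qed

lemma J_trivial:
  assumes K: "K \<ge> 1"
  shows "real (card (J K X)) \<le> K * K"
proof -
  have H: "\<bar>of_int i - (K-1)/2\<bar> \<le> (K-1)/2 \<and> \<bar>of_int j - (K-1)/2\<bar> \<le> (K-1)/2"
    if "(i,j) \<in> J K X" for i j
  proof -
    from that have "0 \<le> i" "0 \<le> j" "of_int i + 1 \<le> K" "of_int j + 1 \<le> K" by (auto simp: J_def)
    hence "0 \<le> real_of_int i" "0 \<le> real_of_int j" "real_of_int i + 1 \<le> K" "real_of_int j + 1 \<le> K" by auto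
    thus ?thesis unfolding abs_le_iff by argo
  qed
  have "real (card (J K X)) \<le> (2*((K-1)/2)+1)*(2*((K-1)/2)+1)"
    by (rule count_lemma[of _ _ _ "(K-1)/2" "\<lambda>_. (K-1)/2"]) (use K H in auto)
  moreover have "(2*((K-1)/2)+1) = K" by (simp add: field_simps)
  ultimately show ?thesis by simp
qed

lemma J_horiz:
  assumes K: "K \<ge> 1" and s: "s \<ge> 0"
    and X: "\<And>x y. (x,y) \<in> X \<Longrightarrow> a3 \<le> x \<and> x \<le> a3 + s \<and> b1 \<le> y \<and> y \<le> b1 + 1/K"
  shows "real (card (J K X)) \<le> (2*(1 + s*K/2)+1)*(2*(3/2)+1)"
proof (rule count_lemma[of _ _ _ "(a3+s/2)*K - 1/2" "\<lambda>_. b1*K"])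
  show "0 \<le> 1 + s*K/2" using s K by simp
  show "0 \<le> (3/2::real)" by simp
  fix i j assume "(i,j) \<in> J K X"
  then obtain x y where xy: "(x,y) \<in> X" "\<bar>x * K - (of_int i + 1/2)\<bar> \<le> 1" "\<bar>y * K - (of_int j + 1/2)\<bar> \<le> 1"
    by (auto simp: J_def)
  have Kp: "K > 0" using K by simp
  from X[OF xy(1)] have xx: "a3 \<le> x" "x \<le> a3 + s" "b1 \<le> y" "y \<le> b1 + 1/K" by auto
  have "a3*K \<le> x*K" "x*K \<le> (a3 + s)*K" "b1*K \<le> y*K" "y*K \<le> (b1 + 1/K)*K"
    using xx Kp by (auto intro!: mult_right_mono)
  hence "a3*K \<le> x*K" "x*K \<le> a3*K + s*K" "b1*K \<le> y*K" "y*K \<le> b1*K + 1"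
    using Kp by (auto simp: algebra_simps)
  thus "\<bar>of_int i - ((a3+s/2)*K - 1/2)\<bar> \<le> 1 + s*K/2 \<and> \<bar>of_int j - b1*K\<bar> \<le> 3/2"
    using xy(2,3) unfolding abs_le_iff by argo
qed

lemma J_cone:
  assumes K: "K \<ge> 1" and s: "s \<ge> 0" and m: "\<bar>m\<bar> \<le> 1" and w: "w \<ge> 0"
    and X: "\<And>x y. (x,y) \<in> X \<Longrightarrow> a3 \<le> x \<and> x \<le> a3 + s \<and> \<bar>y - b1 - m*(x - a1)\<bar> \<le> w"
  shows "real (card (J K X)) \<le> (2*(1 + s*K/2)+1)*(2*(2 + K*w)+1)"
proof (rule count_lemma[of _ _ _ "(a3+s/2)*K - 1/2" "\<lambda>i. (b1 + m*((of_int i + 1/2)/K - a1))*K - 1/2"])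
  show "0 \<le> 1 + s*K/2" using s K by simp
  show "0 \<le> 2 + K*w" using w K by simp
  fix i j assume "(i,j) \<in> J K X"
  then obtain x y where xy: "(x,y) \<in> X" "\<bar>x * K - (of_int i + 1/2)\<bar> \<le> 1" "\<bar>y * K - (of_int j + 1/2)\<bar> \<le> 1"
    by (auto simp: J_def)
  have Kp: "K > 0" using K by simp
  from X[OF xy(1)] have xx: "a3 \<le> x" "x \<le> a3 + s" and yw: "\<bar>y - b1 - m*(x - a1)\<bar> \<le> w" by auto
  have "a3*K \<le> x*K" "x*K \<le> (a3 + s)*K"
    using xx Kp by (auto intro!: mult_right_mono)
  hence xb: "a3*K \<le> x*K" "x*K \<le> a3*K + s*K" by (auto simp: algebra_simps)
  have e: "(y*K - 1/2) - ((b1 + m*((of_int i + 1/2)/K - a1))*K - 1/2)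
      = K*(y - b1 - m*(x - a1)) + m*(x*K - (of_int i + 1/2))"
    using Kp by (simp add: field_simps)
  have "\<bar>K*(y - b1 - m*(x - a1))\<bar> \<le> K*w" using yw Kp by (simp add: abs_mult)
  moreover have "\<bar>m*(x*K - (of_int i + 1/2))\<bar> \<le> 1*1"
    unfolding abs_mult by (rule mult_mono) (use m xy in auto)
  ultimately have "\<bar>(y*K - 1/2) - ((b1 + m*((of_int i + 1/2)/K - a1))*K - 1/2)\<bar> \<le> K*w + 1"
    using e by (smt (verit))
  hence "\<bar>of_int j - ((b1 + m*((of_int i + 1/2)/K - a1))*K - 1/2)\<bar> \<le> 2 + K*w"
    using xy(3) by (auto simp: abs_le_iff)
  moreover have "\<bar>of_int i - ((a3+s/2)*K - 1/2)\<bar> \<le> 1 + s*K/2"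
    using xy(2) xb by (auto simp: algebra_simps abs_le_iff)
  ultimately show "\<bar>of_int i - ((a3+s/2)*K - 1/2)\<bar> \<le> 1 + s*K/2 \<and>
      \<bar>of_int j - ((b1 + m*((of_int i + 1/2)/K - a1))*K - 1/2)\<bar> \<le> 2 + K*w" by simp
qed

lemma J_cone_swap:
  assumes K: "K \<ge> 1" and s: "s \<ge> 0" and m: "\<bar>m\<bar> \<le> 1" and w: "w \<ge> 0"
    and X: "\<And>x y. (x,y) \<in> X \<Longrightarrow> b3 \<le> y \<and> y \<le> b3 + s \<and> \<bar>x - a1 - m*(y - b1)\<bar> \<le> w"
  shows "real (card (J K X)) \<le> (2*(1 + s*K/2)+1)*(2*(2 + K*w)+1)"
proof (rule count_lemma_swap[of _ _ _ "(b3+s/2)*K - 1/2" "\<lambda>j. (a1 + m*((of_int j + 1/2)/K - b1))*K - 1/2"])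
  show "0 \<le> 1 + s*K/2" using s K by simp
  show "0 \<le> 2 + K*w" using w K by simp
  fix i j assume "(i,j) \<in> J K X"
  then obtain x y where xy: "(x,y) \<in> X" "\<bar>x * K - (of_int i + 1/2)\<bar> \<le> 1" "\<bar>y * K - (of_int j + 1/2)\<bar> \<le> 1"
    by (auto simp: J_def)
  have Kp: "K > 0" using K by simp
  from X[OF xy(1)] have xx: "b3 \<le> y" "y \<le> b3 + s" and yw: "\<bar>x - a1 - m*(y - b1)\<bar> \<le> w" by auto
  have "b3*K \<le> y*K" "y*K \<le> (b3 + s)*K"
    using xx Kp by (auto intro!: mult_right_mono)
  hence xb: "b3*K \<le> y*K" "y*K \<le> b3*K + s*K" by (auto simp: algebra_simps)
  have e: "(x*K - 1/2) - ((a1 + m*((of_int j + 1/2)/K - b1))*K - 1/2)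
      = K*(x - a1 - m*(y - b1)) + m*(y*K - (of_int j + 1/2))"
    using Kp by (simp add: field_simps)
  have "\<bar>K*(x - a1 - m*(y - b1))\<bar> \<le> K*w" using yw Kp by (simp add: abs_mult)
  moreover have "\<bar>m*(y*K - (of_int j + 1/2))\<bar> \<le> 1*1"
    unfolding abs_mult by (rule mult_mono) (use m xy in auto)
  ultimately have "\<bar>(x*K - 1/2) - ((a1 + m*((of_int j + 1/2)/K - b1))*K - 1/2)\<bar> \<le> K*w + 1"
    using e by (smt (verit))
  hence "\<bar>of_int i - ((a1 + m*((of_int j + 1/2)/K - b1))*K - 1/2)\<bar> \<le> 2 + K*w"
    using xy(2) by (auto simp: abs_le_iff)
  moreover have "\<bar>of_int j - ((b3+s/2)*K - 1/2)\<bar> \<le> 1 + s*K/2"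
    using xy(3) xb by (auto simp: algebra_simps abs_le_iff)
  ultimately show "\<bar>of_int j - ((b3+s/2)*K - 1/2)\<bar> \<le> 1 + s*K/2 \<and>
      \<bar>of_int i - ((a1 + m*((of_int j + 1/2)/K - b1))*K - 1/2)\<bar> \<le> 2 + K*w" by simp
qed


lemma powr_facts:
  fixes K :: real
  assumes K1: "K \<ge> 1" and d2: "d \<ge> 2"
  shows "K powr (- (1 / 2 ^ (d - 1))) = (K powr (- (1 / 2 ^ d)))^2"
    and "1/K \<le> K powr (- (1 / 2 ^ d))"
    and "K \<ge> 16 \<Longrightarrow> 4/K \<le> (K powr (- (1 / 2 ^ d)))^2"
proof -
  have Kp: "K > 0" using K1 by simp
  have p: "(2::real)^d = 2 * 2^(d-1)" using d2 by (cases d) auto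
  have "-(1/2^(d-1)) = -(1/2^d) + -(1/(2::real)^d)" unfolding p by (simp add: field_simps)
  thus "K powr (- (1 / 2 ^ (d - 1))) = (K powr (- (1 / 2 ^ d)))^2"
    by (simp only: powr_add power2_eq_square)
  have "(1::real) \<le> 2^d" by simp
  hence "-1 \<le> -(1/(2::real)^d)" by (simp add: field_simps)
  hence "K powr (-1) \<le> K powr (- (1 / 2 ^ d))" by (rule powr_mono[OF _ K1])
  moreover have "K powr (-1) = 1/K" using Kp by (simp add: powr_minus_divide)
  ultimately show s1: "1/K \<le> K powr (- (1 / 2 ^ d))" by simp
  assume K16: "K \<ge> 16"
  define s where "s = K powr (- (1 / 2 ^ d))"
  have "(2::real)^2 \<le> 2^d" using d2 by (rule power_increasing) simp
  hence "-(1/4) \<le> -(1/(2::real)^d)" by (simp add: field_simps)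
  hence r: "K powr (-(1/4)) \<le> s" unfolding s_def by (rule powr_mono[OF _ K1])
  have "(K powr (-(1/4)))^4 \<le> s^4" by (rule power_mono[OF r]) simp
  moreover have "(K powr (-(1/4)))^4 = 1/K"
  proof -
    have "(K powr (-(1/4)))^4 = K powr (of_nat 4 * (-(1/4)))" by (rule powr_power) (use Kp in simp)
    also have "\<dots> = K powr (-1)" by simp
    also have "\<dots> = 1/K" using Kp by (simp add: powr_minus_divide)
    finally show ?thesis .
  qed
  ultimately have s4: "1/K \<le> s^4" by simp
  have "K \<le> s^4 * K^2"
  proof -
    have "1/K * K^2 \<le> s^4 * K^2" using s4 by (rule mult_right_mono) simp
    thus ?thesis using Kp by (simp add: power2_eq_square)
  qed
  moreover have "(s^2*K)^2 = s^4 * K^2" by (simp add: power_mult_distrib flip: power_mult)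
  ultimately have "4^2 \<le> (s^2*K)^2" using K16 by simp
  hence "4 \<le> s^2 * K" by (rule power2_le_imp_le) (use Kp in simp)
  thus "4/K \<le> (K powr (- (1 / 2 ^ d)))^2" using Kp by (simp add: s_def divide_le_eq mult.commute)
qed


lemma final_arith:
  fixes K s :: real
  assumes K1: "K \<ge> 1" and sp: "s > 0" and s1: "s \<le> 1" and hs: "1/K \<le> s"
  shows "(2*(1 + s*K/2)+1)*(2*(3/2)+1) + (2*(1 + s*K/2)+1)*(2*(2 + K*(2*(1/K)*(1+2/s)))+1) \<le> 100*K"
proof -
  have Kp: "K > 0" using K1 by simp
  have sK: "s*K \<le> K" using s1 Kp by simp
  have q: "1/s \<le> K" using hs sp Kp by (simp add: field_simps)
  have e1: "(2*(1 + s*K/2)+1)*(2*(3/2)+1) = 12 + 4*(s*K)" by (simp add: algebra_simps)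
  have e2: "(2*(1 + s*K/2)+1)*(2*(2 + K*(2*(1/K)*(1+2/s)))+1) = 27 + 24*(1/s) + 9*(s*K) + 8*K"
    using sp Kp by (simp add: field_simps)
  show ?thesis unfolding e1 e2 using sK q K1 by linarith
qed

theorem lemma6p2:
  shows "\<exists>C1::real. \<forall>(K::real) (d::nat) R1 R2 R3.
    K \<ge> 1 \<longrightarrow> d \<ge> 2 \<longrightarrow> K_square K R1 \<longrightarrow> K_square K R2 \<longrightarrow>
    is_square R3 (K powr (- (1 / 2 ^ d))) \<longrightarrow> R3 \<subseteq> unit_sq \<longrightarrow>
    R1 \<subseteq> R3 \<longrightarrow> R2 \<subseteq> R3 \<longrightarrow>
    \<not> (\<exists>S. is_square S (K powr (- (1 / 2 ^ (d - 1)))) \<and> R1 \<subseteq> S \<and> R2 \<subseteq> S) \<longrightarrow>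
    real (card {Q \<in> dbl ` dyadic_squares K. Q \<inter> Reach_lin R1 R2 R3 \<noteq> {}}) \<le> C1 * K"
proof (intro exI[of _ "100::real"] allI impI)
  fix K :: real and d :: nat and R1 R2 R3 :: "(real \<times> real) set"
  assume K1: "K \<ge> 1" and d2: "d \<ge> 2" and kR1: "K_square K R1" and kR2: "K_square K R2"
    and sR3: "is_square R3 (K powr (- (1 / 2 ^ d)))" and R3u: "R3 \<subseteq> unit_sq"
    and R13: "R1 \<subseteq> R3" and R23: "R2 \<subseteq> R3"
    and nc: "\<not> (\<exists>S. is_square S (K powr (- (1 / 2 ^ (d - 1)))) \<and> R1 \<subseteq> S \<and> R2 \<subseteq> S)"
  define h where "h = 1/K"
  define s where "s = K powr (- (1 / 2 ^ d))"
  have Kp: "K > 0" using K1 by simp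
  have hp: "h > 0" using Kp by (simp add: h_def)
  have sp: "s > 0" using Kp by (simp add: s_def)
  obtain a1 b1 where R1: "R1 = sq a1 b1 h" using kR1 by (auto simp: K_square_def is_square_def h_def)
  obtain a2 b2 where R2: "R2 = sq a2 b2 h" using kR2 by (auto simp: K_square_def is_square_def h_def)
  obtain a3 b3 where R3: "R3 = sq a3 b3 s" using sR3 by (auto simp: is_square_def s_def)
  have "(a3,b3) \<in> unit_sq" "(a3+s,b3) \<in> unit_sq" using R3u sp unfolding R3 by (auto simp: sq_def)
  hence s1: "s \<le> 1" by (auto simp: unit_sq_def sq_def)
  have hs: "h \<le> s" using powr_facts(2)[OF K1 d2] by (simp add: h_def s_def)
  have teq: "K powr (- (1 / 2 ^ (d - 1))) = s^2" using powr_facts(1)[OF K1 d2] by (simp add: s_def)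
  have sep: "\<bar>a2 - a1\<bar> > s^2 - h \<or> \<bar>b2 - b1\<bar> > s^2 - h"
  proof (rule ccontr)
    assume "\<not> ?thesis"
    hence ab: "\<bar>a2 - a1\<bar> \<le> s^2 - h" "\<bar>b2 - b1\<bar> \<le> s^2 - h" by auto
    define S where "S = sq (min a1 a2) (min b1 b2) (s^2)"
    have "is_square S (K powr (- (1 / 2 ^ (d - 1))))" unfolding teq S_def is_square_def by blast
    moreover have "R1 \<subseteq> S" "R2 \<subseteq> S" unfolding R1 R2 S_def using ab
      by (auto simp: sq_def min_def abs_le_iff)
    ultimately show False using nc by blast
  qed
  let ?Reach = "Reach_lin R1 R2 R3"
  have red: "card {Q \<in> dbl ` dyadic_squares K. Q \<inter> ?Reach \<noteq> {}} \<le> card (J K ?Reach)"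
    by (rule card_reduce[OF K1])
  show "real (card {Q \<in> dbl ` dyadic_squares K. Q \<inter> ?Reach \<noteq> {}}) \<le> 100 * K"
  proof (cases "K < 16")
    case True
    have "real (card {Q \<in> dbl ` dyadic_squares K. Q \<inter> ?Reach \<noteq> {}}) \<le> real (card (J K ?Reach))"
      using red by simp
    also have "\<dots> \<le> K * K" by (rule J_trivial[OF K1])
    also have "\<dots> \<le> 16 * K" using True Kp by simp
    finally show ?thesis by simp
  next
    case False
    hence K16: "K \<ge> 16" by simp
    have s4: "4*h \<le> s^2" using powr_facts(3)[OF K1 d2 K16] by (simp add: h_def s_def)
    define Hs where "Hs = {p \<in> R3. \<exists>p1\<in>R1. snd p = snd p1}"
    define Cs where "Cs = {p \<in> R3. \<exists>p1\<in>R1. \<exists>p2\<in>R2. collinear {p, p1, p2}}"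
    have RHC: "?Reach \<subseteq> Hs \<union> Cs" by (auto simp: Reach_lin_def Hs_def Cs_def)
    have cardJ: "card (J K ?Reach) \<le> card (J K Hs) + card (J K Cs)"
    proof -
      have "card (J K ?Reach) \<le> card (J K (Hs \<union> Cs))"
        by (rule card_mono[OF J_finite J_mono[OF RHC]])
      also have "\<dots> \<le> card (J K Hs) + card (J K Cs)" unfolding J_Un by (rule card_Un_le)
      finally show ?thesis .
    qed
    have cH: "real (card (J K Hs)) \<le> (2*(1 + s*K/2)+1)*(2*(3/2)+1)"
    proof (rule J_horiz[OF K1])
      show "s \<ge> 0" using sp by simp
      fix x y assume "(x,y) \<in> Hs"
      then obtain p1 where "(x,y) \<in> R3" "p1 \<in> R1" "y = snd p1" by (auto simp: Hs_def)
      thus "a3 \<le> x \<and> x \<le> a3 + s \<and> b1 \<le> y \<and> y \<le> b1 + 1/K"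
        unfolding R1 R3 h_def by (cases p1) (auto simp: sq_def)
    qed
    define w where "w = 2*h*(1+2/s)"
    have w0: "w \<ge> 0" using hp sp by (simp add: w_def)
    have disj: "\<not> (\<bar>a2 - a1\<bar> \<le> h \<and> \<bar>b2 - b1\<bar> \<le> h)" using sep s4 hp by auto
    have coll: "\<exists>x1 y1 x2 y2 u. a1 \<le> x1 \<and> x1 \<le> a1+h \<and> a2 \<le> x2 \<and> x2 \<le> a2+h \<and>
        b1 \<le> y1 \<and> y1 \<le> b1+h \<and> b2 \<le> y2 \<and> y2 \<le> b2+h \<and>
        a3 \<le> x \<and> x \<le> a3+s \<and> b3 \<le> y \<and> y \<le> b3+s \<and>
        a3 \<le> x1 \<and> x1 \<le> a3+s \<and> b3 \<le> y1 \<and> y1 \<le> b3+s \<and>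
        x = x1 + u*(x2-x1) \<and> y = y1 + u*(y2-y1)" if xy: "(x,y) \<in> Cs" for x y
    proof -
      obtain p1 p2 where p: "(x,y) \<in> R3" "p1 \<in> R1" "p2 \<in> R2" "collinear {(x,y), p1, p2}"
        using xy by (auto simp: Cs_def)
      obtain x1 y1 where p1: "p1 = (x1,y1)" by (cases p1)
      obtain x2 y2 where p2: "p2 = (x2,y2)" by (cases p2)
      have "collinear {p2, (x,y), p1}" using p(4) by (simp add: insert_commute)
      hence cc: "p2 = p1 \<or> (\<exists>u. (x,y) = u *\<^sub>R p2 + (1 - u) *\<^sub>R p1)" by (simp add: collinear_3_expand)
      have b1: "a1 \<le> x1 \<and> x1 \<le> a1+h \<and> b1 \<le> y1 \<and> y1 \<le> b1+h" using p(2) unfolding R1 p1 by (simp add: sq_def)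
      have b2: "a2 \<le> x2 \<and> x2 \<le> a2+h \<and> b2 \<le> y2 \<and> y2 \<le> b2+h" using p(3) unfolding R2 p2 by (simp add: sq_def)
      have b3: "a3 \<le> x \<and> x \<le> a3+s \<and> b3 \<le> y \<and> y \<le> b3+s" using p(1) unfolding R3 by (simp add: sq_def)
      have b13: "a3 \<le> x1 \<and> x1 \<le> a3+s \<and> b3 \<le> y1 \<and> y1 \<le> b3+s" using p(2) R13 unfolding R3 p1 by (auto simp: sq_def)
      have "p2 \<noteq> p1"
      proof
        assume "p2 = p1"
        hence "x2 = x1" "y2 = y1" using p1 p2 by auto
        hence "\<bar>a2 - a1\<bar> \<le> h \<and> \<bar>b2 - b1\<bar> \<le> h" using b1 b2 by (auto simp: abs_le_iff)
        with disj show False by blast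
      qed
      with cc obtain u where "(x,y) = u *\<^sub>R p2 + (1 - u) *\<^sub>R p1" by blast
      hence "x = x1 + u*(x2-x1)" "y = y1 + u*(y2-y1)" unfolding p1 p2 by (auto simp: algebra_simps)
      thus ?thesis using b1 b2 b3 b13 by blast
    qed
    have cC: "real (card (J K Cs)) \<le> (2*(1 + s*K/2)+1)*(2*(2 + K*w)+1)"
    proof (cases "\<bar>b2 - b1\<bar> \<le> \<bar>a2 - a1\<bar>")
      case True
      have big: "\<bar>a2-a1\<bar> - h \<ge> s^2/2" using sep True s4 by auto
      have da: "a2 - a1 \<noteq> 0" using big s4 hp by auto
      show ?thesis
      proof (rule J_cone[OF K1 _ _ w0, of s "(b2-b1)/(a2-a1)"])
        show "s \<ge> 0" using sp by simp
        show "\<bar>(b2-b1)/(a2-a1)\<bar> \<le> 1" using True da by (simp add: abs_divide divide_le_eq_1)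
        fix x y assume "(x,y) \<in> Cs"
        from coll[OF this] obtain x1 y1 x2 y2 u where c: "a1 \<le> x1 \<and> x1 \<le> a1+h \<and> a2 \<le> x2 \<and> x2 \<le> a2+h \<and>
          b1 \<le> y1 \<and> y1 \<le> b1+h \<and> b2 \<le> y2 \<and> y2 \<le> b2+h \<and>
          a3 \<le> x \<and> x \<le> a3+s \<and> b3 \<le> y \<and> y \<le> b3+s \<and>
          a3 \<le> x1 \<and> x1 \<le> a3+s \<and> b3 \<le> y1 \<and> y1 \<le> b3+s \<and>
          x = x1 + u*(x2-x1) \<and> y = y1 + u*(y2-y1)" by blast
        have "\<bar>y - b1 - ((b2-b1)/(a2-a1))*(x-a1)\<bar> \<le> 2*h*(1+2/s)"
          by (rule cone_num[OF hp sp, of a1 x1 a2 x2 b1 y1 b2 y2 a3 x]) (use c True big in auto)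
        thus "a3 \<le> x \<and> x \<le> a3 + s \<and> \<bar>y - b1 - ((b2-b1)/(a2-a1))*(x - a1)\<bar> \<le> w"
          using c by (simp add: w_def)
      qed
    next
      case False
      have big: "\<bar>b2-b1\<bar> - h \<ge> s^2/2" using sep False s4 by auto
      have db: "b2 - b1 \<noteq> 0" using big s4 hp by auto
      show ?thesis
      proof (rule J_cone_swap[OF K1 _ _ w0, of s "(a2-a1)/(b2-b1)"])
        show "s \<ge> 0" using sp by simp
        show "\<bar>(a2-a1)/(b2-b1)\<bar> \<le> 1" using False db by (simp add: abs_divide divide_le_eq_1)
        fix x y assume "(x,y) \<in> Cs"
        from coll[OF this] obtain x1 y1 x2 y2 u where c: "a1 \<le> x1 \<and> x1 \<le> a1+h \<and> a2 \<le> x2 \<and> x2 \<le> a2+h \<and>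
          b1 \<le> y1 \<and> y1 \<le> b1+h \<and> b2 \<le> y2 \<and> y2 \<le> b2+h \<and>
          a3 \<le> x \<and> x \<le> a3+s \<and> b3 \<le> y \<and> y \<le> b3+s \<and>
          a3 \<le> x1 \<and> x1 \<le> a3+s \<and> b3 \<le> y1 \<and> y1 \<le> b3+s \<and>
          x = x1 + u*(x2-x1) \<and> y = y1 + u*(y2-y1)" by blast
        have "\<bar>x - a1 - ((a2-a1)/(b2-b1))*(y-b1)\<bar> \<le> 2*h*(1+2/s)"
          by (rule cone_num[OF hp sp, of b1 y1 b2 y2 a1 x1 a2 x2 b3 y]) (use c False big in auto)
        thus "b3 \<le> y \<and> y \<le> b3 + s \<and> \<bar>x - a1 - ((a2-a1)/(b2-b1))*(y - b1)\<bar> \<le> w"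
          using c by (simp add: w_def)
      qed
    qed
    have "real (card {Q \<in> dbl ` dyadic_squares K. Q \<inter> ?Reach \<noteq> {}})
        \<le> real (card (J K Hs)) + real (card (J K Cs))"
      using red cardJ by linarith
    also have "\<dots> \<le> (2*(1 + s*K/2)+1)*(2*(3/2)+1) + (2*(1 + s*K/2)+1)*(2*(2 + K*(2*(1/K)*(1+2/s)))+1)"
      using cH cC by (simp add: w_def h_def)
    also have "\<dots> \<le> 100*K"
      by (rule final_arith[OF K1 sp s1]) (use hs in \<open>simp add: h_def\<close>)
    finally show ?thesis .
  qed
qed

end
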